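(* For every $A\in\mathrm{Sym}(\mathbb R^{n+1})$, $$\big|\widetilde\Theta(A)-\mathrm{tr}\tan^{-1}(A^+)\big|\le\pi/2,\qquad \big|\underline{\widetilde\Theta}(A)-\mathrm{tr}\tan^{-1}(A^+)\big|\le\pi/2.$$
   Context: For $A=[a_{ij}]_{i,j=0}^n\in\mathrm{Sym}(\mathbb R^{n+1})$ write $A^+=[a_{ij}]_{i,j=1}^n$; $I_n=\mathrm{diag}(0,1,\dots,1)$; $\mathcal S=\{A: A=\mathrm{diag}(0,A^+)\}$. $\arg$ has values in $(-\pi,\pi]$, $\tan^{-1}$ in $(-\pi/2,\pi/2)$, applied to symmetric matrices via eigenvalues. For $A\notin\mathcal S$, $\widehat\Theta(A)=\sum_{\lambda\in\mathrm{spec}(I_n+\sqrt{-1}A)}m(\lambda)\arg\lambda$ ($m$ = algebraic multiplicity). $\widetilde\Theta=\underline{\widetilde\Theta}=\widehat\Theta$ off $\mathcal S$; on $\mathcal S$, $\widetilde\Theta(A)=\pi/2+\mathrm{tr}\tan^{-1}(A^+)$ and $\underline{\widetilde\Theta}(A)=-\pi/2+\mathrm{tr}\tan^{-1}(A^+)$. *)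

theory Defs
  imports "HOL-Analysis.Analysis" "Jordan_Normal_Form.Char_Poly"
begin

definition sym_mat :: "nat \<Rightarrow> real mat \<Rightarrow> bool" where
  "sym_mat n A \<longleftrightarrow> A \<in> carrier_mat (Suc n) (Suc n) \<and> transpose_mat A = A"

(* A^+ = [a_ij]_{i,j=1}^n *)
definition plus_part :: "nat \<Rightarrow> real mat \<Rightarrow> real mat" where
  "plus_part n A = mat n n (\<lambda>(i,j). A $$ (Suc i, Suc j))"

(* I_n + sqrt(-1) A, with I_n = diag(0,1,...,1) *)
definition In_iA :: "nat \<Rightarrow> real mat \<Rightarrow> complex mat" where
  "In_iA n A = mat (Suc n) (Suc n)
     (\<lambda>(i,j). (if i = j \<and> i \<noteq> 0 then 1 else 0) + \<i> * complex_of_real (A $$ (i,j)))"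

(* the set S: A = diag(0, A^+) *)
definition in_S :: "nat \<Rightarrow> real mat \<Rightarrow> bool" where
  "in_S n A \<longleftrightarrow> (\<forall>j\<le>n. A $$ (0,j) = 0 \<and> A $$ (j,0) = 0)"

definition Theta_hat :: "nat \<Rightarrow> real mat \<Rightarrow> real" where
  "Theta_hat n A = (\<Sum>z\<in>{z. eigenvalue (In_iA n A) z}.
      real (order z (char_poly (In_iA n A))) * Arg z)"

definition tr_arctan :: "real mat \<Rightarrow> real" where
  "tr_arctan B = (\<Sum>m\<in>{m. eigenvalue B m}. real (order m (char_poly B)) * arctan m)"

definition Theta_tilde :: "nat \<Rightarrow> real mat \<Rightarrow> real" where
  "Theta_tilde n A = (if in_S n A then pi/2 + tr_arctan (plus_part n A) else Theta_hat n A)"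

definition Theta_tilde_low :: "nat \<Rightarrow> real mat \<Rightarrow> real" where
  "Theta_tilde_low n A = (if in_S n A then - pi/2 + tr_arctan (plus_part n A) else Theta_hat n A)"

end

theory Submission
  imports Defs
begin

no_notation vec_nth (infixl "$" 90)



definition qf :: "nat \<Rightarrow> complex mat \<Rightarrow> complex vec \<Rightarrow> complex" where
  "qf m S v = (\<Sum>i<m. cnj (v$i) * (S *\<^sub>v v)$i)"

definition hmat :: "nat \<Rightarrow> (nat \<Rightarrow> real) \<Rightarrow> real \<Rightarrow> real mat \<Rightarrow> complex mat" where
  "hmat m d c B = mat m m (\<lambda>(i,j). (if i = j then complex_of_real (d i) else 0)
      + \<i> * complex_of_real (c * B$$(i,j)))"

lemma hmat_carrier[simp]: "hmat m d c B \<in> carrier_mat m m"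
  by (simp add: hmat_def)

lemma hmat_index[simp]: "i < m \<Longrightarrow> j < m \<Longrightarrow> hmat m d c B $$ (i,j) =
   (if i = j then complex_of_real (d i) else 0) + \<i> * complex_of_real (c * B$$(i,j))"
  by (simp add: hmat_def)

lemma mulvec_entry:
  assumes "S \<in> carrier_mat m m" "v \<in> carrier_vec m" "i < m"
  shows "(S *\<^sub>v v)$i = (\<Sum>j<m. S$$(i,j) * v$j)"
  using assms by (auto simp: scalar_prod_def lessThan_atLeast0 intro!: sum.cong)

lemma dsum_real:
  fixes B :: "real mat"
  assumes sym: "\<And>i j. i<m \<Longrightarrow> j<m \<Longrightarrow> B$$(i,j) = B$$(j,i)"
  shows "Im (\<Sum>i<m. \<Sum>j<m. cnj (v$i) * complex_of_real (B$$(i,j)) * v$j) = 0"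
proof -
  let ?X = "\<Sum>i<m. \<Sum>j<m. cnj (v$i) * complex_of_real (B$$(i,j)) * v$j"
  have "cnj ?X = (\<Sum>i<m. \<Sum>j<m. v$i * complex_of_real (B$$(i,j)) * cnj (v$j))"
    by (simp add: cnj_sum)
  also have "\<dots> = (\<Sum>j<m. \<Sum>i<m. v$i * complex_of_real (B$$(i,j)) * cnj (v$j))"
    by (rule sum.swap)
  also have "\<dots> = ?X"
    by (intro sum.cong refl) (simp add: sym mult.commute mult.left_commute)
  finally have "cnj ?X = ?X" .
  then show ?thesis by (simp only: Reals_cnj_iff[symmetric] complex_is_Real_iff)
qed

lemma hmat_Re_qf:
  fixes B :: "real mat"
  assumes sym: "\<And>i j. i<m \<Longrightarrow> j<m \<Longrightarrow> B$$(i,j) = B$$(j,i)" and v: "v \<in> carrier_vec m"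
  shows "Re (qf m (hmat m d c B) v) = (\<Sum>i<m. d i * (cmod (v$i))^2)"
proof -
  let ?X = "\<Sum>i<m. \<Sum>j<m. cnj (v$i) * complex_of_real (B$$(i,j)) * v$j"
  have "qf m (hmat m d c B) v = (\<Sum>i<m. cnj (v$i) * (\<Sum>j<m. hmat m d c B $$(i,j) * v$j))"
    unfolding qf_def by (intro sum.cong refl, subst mulvec_entry[OF hmat_carrier v], auto)
  also have "\<dots> = (\<Sum>i<m. complex_of_real (d i) * (cnj (v$i) * v$i)
        + \<i> * complex_of_real c * (\<Sum>j<m. cnj (v$i) * complex_of_real (B$$(i,j)) * v$j))"
  proof (intro sum.cong refl)
    fix i assume i: "i \<in> {..<m}"
    have "(\<Sum>j<m. hmat m d c B $$(i,j) * v$j) = (\<Sum>j<m. (if i = j then complex_of_real (d i) * v$j else 0)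
         + \<i> * complex_of_real c * (complex_of_real (B$$(i,j)) * v$j))"
      using i by (intro sum.cong refl) (auto simp: algebra_simps)
    also have "\<dots> = complex_of_real (d i) * v$i + \<i> * complex_of_real c * (\<Sum>j<m. complex_of_real (B$$(i,j)) * v$j)"
      using i by (simp add: sum.distrib sum_distrib_left)
    finally show "cnj (v$i) * (\<Sum>j<m. hmat m d c B $$(i,j) * v$j) = complex_of_real (d i) * (cnj (v$i) * v$i)
        + \<i> * complex_of_real c * (\<Sum>j<m. cnj (v$i) * complex_of_real (B$$(i,j)) * v$j)"
      by (simp add: algebra_simps sum_distrib_left)
  qed
  also have "\<dots> = (\<Sum>i<m. complex_of_real (d i) * (cnj (v$i) * v$i)) + \<i> * complex_of_real c * ?X"
    by (simp add: sum.distrib sum_distrib_left)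
  finally have eq: "qf m (hmat m d c B) v = (\<Sum>i<m. complex_of_real (d i) * (cnj (v$i) * v$i)) + \<i> * complex_of_real c * ?X" .
  have imX: "Im ?X = 0" by (rule dsum_real[OF sym])
  have "\<And>i. Re (complex_of_real (d i) * (cnj (v$i) * v$i)) = d i * (cmod (v$i))^2"
    unfolding cmod_power2 by (simp add: power2_eq_square algebra_simps)
  then show ?thesis unfolding eq using imX by (simp only: Re_sum plus_complex.sel) simp
qed




lemma sym_mat_sym: "sym_mat n A \<Longrightarrow> i < Suc n \<Longrightarrow> j < Suc n \<Longrightarrow> A$$(i,j) = A$$(j,i)"
  unfolding sym_mat_def by (metis carrier_matD(1,2) index_transpose_mat(1))

lemma In_iA_hmat: "In_iA n A = hmat (Suc n) (\<lambda>i. if i = 0 then 0 else 1) 1 A"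
  by (rule eq_matI) (auto simp: In_iA_def hmat_def)

lemma qf_eigen:
  assumes S: "S \<in> carrier_mat m m" and v: "v \<in> carrier_vec m" and ev: "S *\<^sub>v v = z \<cdot>\<^sub>v v"
  shows "qf m S v = z * complex_of_real (\<Sum>i<m. (cmod (v$i))^2)"
proof -
  have "qf m S v = (\<Sum>i<m. z * (cnj (v$i) * v$i))"
    unfolding qf_def ev using v by (intro sum.cong refl) (auto simp: algebra_simps)
  also have "\<dots> = z * complex_of_real (\<Sum>i<m. (cmod (v$i))^2)"
    by (simp only: of_real_sum sum_distrib_left complex_norm_square mult_ac)
  finally show ?thesis .
qed

lemma vec_pos:
  assumes v: "v \<in> carrier_vec m" and nz: "v \<noteq> 0\<^sub>v m"
  shows "(\<Sum>i<m. (cmod (v$i))^2) > 0"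
proof -
  from v nz obtain i where i: "i < m" "v$i \<noteq> 0" by (metis eq_vecI carrier_vecD index_zero_vec(1,2))
  have "(cmod (v$i))^2 \<le> (\<Sum>i<m. (cmod (v$i))^2)"
    using i by (intro member_le_sum) auto
  moreover have "(cmod (v$i))^2 > 0" using i by simp
  ultimately show ?thesis by linarith
qed

lemma eig_M:
  assumes sym: "sym_mat n A" and nS: "\<not> in_S n A" and ev: "eigenvalue (In_iA n A) z"
  shows "0 \<le> Re z" "z \<noteq> 0"
proof -
  let ?M = "In_iA n A"
  let ?d = "\<lambda>i::nat. if i = 0 then 0 else (1::real)"
  have M: "?M \<in> carrier_mat (Suc n) (Suc n)" by (simp add: In_iA_hmat)
  from ev obtain v where v: "v \<in> carrier_vec (Suc n)" "v \<noteq> 0\<^sub>v (Suc n)" "?M *\<^sub>v v = z \<cdot>\<^sub>v v"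
    unfolding eigenvalue_def eigenvector_def using M by auto
  define S where "S = (\<Sum>i<Suc n. (cmod (v$i))^2)"
  have Spos: "S > 0" unfolding S_def by (rule vec_pos[OF v(1,2)])
  have q1: "qf (Suc n) ?M v = z * complex_of_real S"
    unfolding S_def by (rule qf_eigen[OF M v(1,3)])
  have q2: "Re (qf (Suc n) ?M v) = (\<Sum>i<Suc n. ?d i * (cmod (v$i))^2)"
    unfolding In_iA_hmat by (rule hmat_Re_qf[OF sym_mat_sym[OF sym] v(1)])
  define T where "T = (\<Sum>i<Suc n. ?d i * (cmod (v$i))^2)"
  have Tnn: "T \<ge> 0" unfolding T_def by (intro sum_nonneg) auto
  have "Re z * S = T" using q1 q2 unfolding T_def by simp
  then show "0 \<le> Re z" using Spos Tnn by (metis zero_le_mult_iff not_less order_le_less)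
  show "z \<noteq> 0"
  proof
    assume z0: "z = 0"
    have "T = 0" using \<open>Re z * S = T\<close> z0 by simp
    hence "\<forall>i\<in>{..<Suc n}. ?d i * (cmod (v$i))^2 = 0"
      unfolding T_def by (subst sum_nonneg_eq_0_iff[symmetric]) auto
    hence vi: "\<And>i. i < Suc n \<Longrightarrow> i \<noteq> 0 \<Longrightarrow> v$i = 0"
    proof -
      fix i assume all: "\<forall>i\<in>{..<Suc n}. ?d i * (cmod (v$i))^2 = 0" and i: "i < Suc n" "i \<noteq> 0"
      hence "?d i * (cmod (v$i))^2 = 0" by blast
      hence "(cmod (v$i))^2 = 0" using i(2) by simp
      thus "v$i = 0" by simp
    qed
    have v0: "v$0 \<noteq> 0"
    proof
      assume "v$0 = 0"
      hence "v = 0\<^sub>v (Suc n)" using vi v(1) by (intro eq_vecI) auto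
      with v(2) show False by simp
    qed
    have "A$$(i,0) = 0" if i: "i < Suc n" for i
    proof -
      have "(?M *\<^sub>v v)$i = 0" using v(3) z0 i v(1) by simp
      moreover have "(?M *\<^sub>v v)$i = (\<Sum>j<Suc n. ?M$$(i,j) * v$j)"
        by (rule mulvec_entry[OF M v(1) i])
      moreover have "(\<Sum>j<Suc n. ?M$$(i,j) * v$j) = ?M$$(i,0) * v$0"
        using vi by (subst sum.lessThan_Suc_shift) auto
      moreover have "?M$$(i,0) = \<i> * complex_of_real (A$$(i,0))"
        using i by (auto simp: In_iA_def)
      ultimately show ?thesis using v0 by simp
    qed
    hence "in_S n A" unfolding in_S_def using sym_mat_sym[OF sym] by auto
    with nS show False by simp
  qed
qed




lemma cp_decomp:
  fixes X :: "complex mat"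
  assumes X: "X \<in> carrier_mat N N"
  shows "char_poly X = (\<Prod>z\<in>{z. eigenvalue X z}. [:-z,1:]^order z (char_poly X))"
    "finite {z. eigenvalue X z}"
    "(\<Sum>z\<in>{z. eigenvalue X z}. order z (char_poly X)) = N"
proof -
  let ?p = "char_poly X"
  have deg: "degree ?p = N" "coeff ?p N = 1" using degree_monic_char_poly[OF X] by auto
  hence lc: "lead_coeff ?p = 1" by simp
  have set: "{z. eigenvalue X z} = {z. poly ?p z = 0}"
    using eigenvalue_root_char_poly[OF X] by auto
  have p0: "?p \<noteq> 0" using deg by auto
  show fin: "finite {z. eigenvalue X z}" unfolding set using poly_roots_finite[OF p0] .
  show dec: "?p = (\<Prod>z\<in>{z. eigenvalue X z}. [:-z,1:]^order z ?p)"
    unfolding set using complex_poly_decompose[of ?p] lc by simp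
  have "N = degree (\<Prod>z\<in>{z. eigenvalue X z}. [:-z,1:]^order z ?p)"
    using deg(1) dec by simp
  also have "\<dots> = (\<Sum>z\<in>{z. eigenvalue X z}. degree ([:-z,1:]^order z ?p))"
    by (rule degree_prod_eq_sum_degree) auto
  also have "\<dots> = (\<Sum>z\<in>{z. eigenvalue X z}. order z ?p)"
    by (simp add: degree_linear_power)
  finally show "(\<Sum>z\<in>{z. eigenvalue X z}. order z ?p) = N" by simp
qed

lemma det_scaled:
  fixes X :: "complex mat"
  assumes X: "X \<in> carrier_mat N N"
  shows "det (c \<cdot>\<^sub>m (- (char_matrix X x))) =
     (\<Prod>z\<in>{z. eigenvalue X z}. (c*(x-z))^order z (char_poly X))"
proof -
  let ?E = "{z. eigenvalue X z}" and ?k = "\<lambda>z. order z (char_poly X)"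
  note d = cp_decomp[OF X]
  have "det (c \<cdot>\<^sub>m (- (char_matrix X x))) = c ^ N * det (- (char_matrix X x))"
    using carrier_matD(2)[OF char_matrix_closed[OF X, of x]] by simp
  also have "det (- (char_matrix X x)) = poly (char_poly X) x"
    using char_poly_matrix[OF X] by simp
  also have "\<dots> = (\<Prod>z\<in>?E. (x - z)^?k z)"
    by (subst d(1)) (simp add: poly_prod)
  also have "c ^ N = (\<Prod>z\<in>?E. c^?k z)"
    by (subst d(3)[symmetric]) (rule power_sum)
  finally show ?thesis
    by (simp add: prod.distrib[symmetric] power_mult_distrib)
qed




lemma hmat_dims[simp]: "dim_row (hmat m d c B) = m" "dim_col (hmat m d c B) = m"
  by (simp_all add: hmat_def)

lemma herm_real:
  fixes C :: "real mat"
  assumes C: "C \<in> carrier_mat m m" and sym: "\<And>i j. i<m \<Longrightarrow> j<m \<Longrightarrow> C$$(i,j) = C$$(j,i)"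
    and ev: "eigenvalue (map_mat complex_of_real C) z"
  shows "Im z = 0"
proof -
  let ?Cc = "map_mat complex_of_real C"
  let ?W = "hmat m (\<lambda>_. 0) 1 C"
  have Cc: "?Cc \<in> carrier_mat m m" using C by simp
  from ev obtain v where v: "v \<in> carrier_vec m" "v \<noteq> 0\<^sub>v m" "?Cc *\<^sub>v v = z \<cdot>\<^sub>v v"
    unfolding eigenvalue_def eigenvector_def using Cc by auto
  have Wv: "?W *\<^sub>v v = (\<i> * z) \<cdot>\<^sub>v v"
  proof (rule eq_vecI)
    fix i assume i: "i < dim_vec ((\<i> * z) \<cdot>\<^sub>v v)"
    hence i': "i < m" using v(1) by simp
    have "(?W *\<^sub>v v)$i = (\<Sum>j<m. ?W$$(i,j) * v$j)" by (rule mulvec_entry[OF hmat_carrier v(1) i'])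
    also have "\<dots> = \<i> * (\<Sum>j<m. ?Cc$$(i,j) * v$j)"
      using i' C by (auto simp: sum_distrib_left mult.assoc intro!: sum.cong)
    also have "(\<Sum>j<m. ?Cc$$(i,j) * v$j) = (?Cc *\<^sub>v v)$i" by (rule mulvec_entry[OF Cc v(1) i', symmetric])
    also have "\<dots> = z * v$i" using v i' by simp
    finally show "(?W *\<^sub>v v)$i = ((\<i> * z) \<cdot>\<^sub>v v)$i" using i' v(1) by simp
  qed (use v in simp)
  define S where "S = (\<Sum>i<m. (cmod (v$i))^2)"
  have Spos: "S > 0" unfolding S_def by (rule vec_pos[OF v(1,2)])
  have "qf m ?W v = (\<i> * z) * complex_of_real S"
    unfolding S_def by (rule qf_eigen[OF hmat_carrier v(1) Wv])
  moreover have "Re (qf m ?W v) = 0"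
    using hmat_Re_qf[OF sym v(1), of "\<lambda>_. 0" 1] by simp
  ultimately have "Im z * S = 0" by simp
  thus ?thesis using Spos by simp
qed

definition Nt :: "nat \<Rightarrow> real mat \<Rightarrow> real \<Rightarrow> complex mat" where
  "Nt n A t = hmat (Suc n) (\<lambda>i. if i = 0 then 1 - t else 1) t A"

definition Dt :: "nat \<Rightarrow> real mat \<Rightarrow> real \<Rightarrow> complex mat" where
  "Dt n A t = hmat n (\<lambda>i. 1) t (plus_part n A)"

lemma Nt_det:
  assumes t: "t > 0"
  shows "det (Nt n A t) = (\<Prod>z\<in>{z. eigenvalue (In_iA n A) z}.
      (1 - complex_of_real t + complex_of_real t * z)^order z (char_poly (In_iA n A)))"
proof -
  let ?M = "In_iA n A"
  let ?x = "complex_of_real ((t-1)/t)"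
  have M: "?M \<in> carrier_mat (Suc n) (Suc n)" by (simp add: In_iA_hmat)
  have eq: "Nt n A t = (- complex_of_real t) \<cdot>\<^sub>m (- (char_matrix ?M ?x))"
  proof (rule eq_matI)
    fix i j assume "i < dim_row (- complex_of_real t \<cdot>\<^sub>m - char_matrix ?M ?x)"
      "j < dim_col (- complex_of_real t \<cdot>\<^sub>m - char_matrix ?M ?x)"
    hence ij: "i < Suc n" "j < Suc n" using M by (auto simp: char_matrix_def)
    show "Nt n A t $$ (i, j) = (- complex_of_real t \<cdot>\<^sub>m - char_matrix ?M ?x) $$ (i, j)"
      using ij t by (auto simp: Nt_def char_matrix_def In_iA_def field_simps)
  qed (auto simp: Nt_def char_matrix_def In_iA_def)
  have "det (Nt n A t) = (\<Prod>z\<in>{z. eigenvalue ?M z}. ((- complex_of_real t)*(?x-z))^order z (char_poly ?M))"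
    unfolding eq by (rule det_scaled[OF M])
  also have "\<dots> = (\<Prod>z\<in>{z. eigenvalue ?M z}. (1 - complex_of_real t + complex_of_real t * z)^order z (char_poly ?M))"
  proof (intro prod.cong refl)
    fix z
    have "complex_of_real t * ?x = complex_of_real t - 1"
    proof -
      have "t * ((t-1)/t) = t - 1" using t by (simp add: field_simps)
      hence "complex_of_real (t * ((t-1)/t)) = complex_of_real (t - 1)" by simp
      thus ?thesis by (simp only: of_real_mult of_real_diff of_real_1)
    qed
    hence "(- complex_of_real t)*(?x-z) = 1 - complex_of_real t + complex_of_real t * z"
      by (metis (no_types, lifting) add.commute add_diff_eq diff_add_cancel diff_diff_eq2 minus_diff_eq
          mult.commute mult_minus_left right_diff_distrib)
    thus "((- complex_of_real t)*(?x-z))^order z (char_poly ?M) = (1 - complex_of_real t + complex_of_real t * z)^order z (char_poly ?M)"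
      by simp
  qed
  finally show ?thesis .
qed




interpretation ofr: map_poly_inj_idom_divide_hom "of_real :: real \<Rightarrow> complex" ..

lemma plus_part_carrier: "plus_part n A \<in> carrier_mat n n"
  by (simp add: plus_part_def)

lemma plus_part_sym: "sym_mat n A \<Longrightarrow> i < n \<Longrightarrow> j < n \<Longrightarrow> plus_part n A $$ (i,j) = plus_part n A $$ (j,i)"
  by (simp add: plus_part_def sym_mat_sym)

lemma eig_C_set:
  assumes sym: "sym_mat n A"
  shows "{z. eigenvalue (map_mat complex_of_real (plus_part n A)) z} = complex_of_real ` {m. eigenvalue (plus_part n A) m}"
proof -
  let ?C = "plus_part n A"
  let ?Cc = "map_mat complex_of_real ?C"
  have C: "?C \<in> carrier_mat n n" by (rule plus_part_carrier)
  have Cc: "?Cc \<in> carrier_mat n n" using C by simp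
  have cp: "char_poly ?Cc = map_poly complex_of_real (char_poly ?C)"
    by (rule of_real_hom.char_poly_hom[OF C])
  show ?thesis
  proof (intro equalityI subsetI)
    fix z assume "z \<in> {z. eigenvalue ?Cc z}"
    hence ev: "eigenvalue ?Cc z" by simp
    have im: "Im z = 0" by (rule herm_real[OF C plus_part_sym[OF sym] ev])
    hence zr: "z = complex_of_real (Re z)" by (simp add: complex_eq_iff)
    have "poly (char_poly ?Cc) z = 0" using ev eigenvalue_root_char_poly[OF Cc] by simp
    hence "complex_of_real (poly (char_poly ?C) (Re z)) = 0"
      unfolding cp by (subst (asm) zr) (simp only: of_real_hom.poly_map_poly)
    hence "poly (char_poly ?C) (Re z) = 0" by simp
    hence "eigenvalue ?C (Re z)" using eigenvalue_root_char_poly[OF C] by simp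
    thus "z \<in> complex_of_real ` {m. eigenvalue ?C m}" using zr by blast
  next
    fix z assume "z \<in> complex_of_real ` {m. eigenvalue ?C m}"
    then obtain m where z: "z = complex_of_real m" and ev: "eigenvalue ?C m" by blast
    have "eigenvalue ?Cc (complex_of_real m)" by (rule of_real_hom.eigenvalue_hom[OF C ev])
    thus "z \<in> {z. eigenvalue ?Cc z}" using z by simp
  qed
qed

lemma Dt_det:
  assumes sym: "sym_mat n A" and t: "t > 0"
  shows "det (Dt n A t) = (\<Prod>m\<in>{m. eigenvalue (plus_part n A) m}.
      (1 + \<i> * complex_of_real t * complex_of_real m)^order m (char_poly (plus_part n A)))"
proof -
  let ?C = "plus_part n A"
  let ?Cc = "map_mat complex_of_real ?C"
  have C: "?C \<in> carrier_mat n n" by (rule plus_part_carrier)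
  have Cc: "?Cc \<in> carrier_mat n n" using C by simp
  have cp: "char_poly ?Cc = map_poly complex_of_real (char_poly ?C)"
    by (rule of_real_hom.char_poly_hom[OF C])
  define x where "x = \<i> / complex_of_real t"
  have tx: "\<i> * complex_of_real t * x = -1" using t by (simp add: x_def)
  have eq: "Dt n A t = (- (\<i> * complex_of_real t)) \<cdot>\<^sub>m (- (char_matrix ?Cc x))"
  proof (rule eq_matI)
    fix i j assume "i < dim_row (- (\<i> * complex_of_real t) \<cdot>\<^sub>m - char_matrix ?Cc x)"
      "j < dim_col (- (\<i> * complex_of_real t) \<cdot>\<^sub>m - char_matrix ?Cc x)"
    hence ij: "i < n" "j < n" using C by (auto simp: char_matrix_def)
    have "(- (\<i> * complex_of_real t) \<cdot>\<^sub>m - char_matrix ?Cc x) $$ (i, j)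
       = \<i> * complex_of_real t * complex_of_real (?C $$ (i,j)) - (if i = j then \<i> * complex_of_real t * x else 0)"
      using ij C by (auto simp: char_matrix_def algebra_simps)
    also have "\<dots> = Dt n A t $$ (i, j)"
      using ij tx by (auto simp: Dt_def)
    finally show "Dt n A t $$ (i, j) = (- (\<i> * complex_of_real t) \<cdot>\<^sub>m - char_matrix ?Cc x) $$ (i, j)" by simp
  qed (use C in \<open>auto simp: Dt_def char_matrix_def\<close>)
  have "det (Dt n A t) = (\<Prod>z\<in>{z. eigenvalue ?Cc z}. ((- (\<i> * complex_of_real t))*(x-z))^order z (char_poly ?Cc))"
    unfolding eq by (rule det_scaled[OF Cc])
  also have "\<dots> = (\<Prod>z\<in>complex_of_real ` {m. eigenvalue ?C m}. ((- (\<i> * complex_of_real t))*(x-z))^order z (char_poly ?Cc))"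
    unfolding eig_C_set[OF sym] ..
  also have "\<dots> = (\<Prod>m\<in>{m. eigenvalue ?C m}. ((- (\<i> * complex_of_real t))*(x- complex_of_real m))^order (complex_of_real m) (char_poly ?Cc))"
    by (subst prod.reindex) (auto simp: inj_on_def)
  also have "\<dots> = (\<Prod>m\<in>{m. eigenvalue ?C m}. (1 + \<i> * complex_of_real t * complex_of_real m)^order m (char_poly ?C))"
  proof (intro prod.cong refl)
    fix m
    have "(- (\<i> * complex_of_real t))*(x- complex_of_real m) = - (\<i> * complex_of_real t * x) + \<i> * complex_of_real t * complex_of_real m"
      by (simp add: algebra_simps)
    also have "\<dots> = 1 + \<i> * complex_of_real t * complex_of_real m" using tx by simp
    finally show "((- (\<i> * complex_of_real t))*(x- complex_of_real m))^order (complex_of_real m) (char_poly ?Cc)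
      = (1 + \<i> * complex_of_real t * complex_of_real m)^order m (char_poly ?C)"
      unfolding cp ofr.order_hom by simp
  qed
  finally show ?thesis .
qed




lemma Nt_delete: "mat_delete (Nt n A t) 0 0 = Dt n A t"
  by (rule eq_matI) (auto simp: mat_delete_def Nt_def Dt_def plus_part_def)

lemma Nt_dims[simp]: "dim_row (Nt n A t) = Suc n" "dim_col (Nt n A t) = Suc n"
  by (simp_all add: Nt_def)

lemma Re_det_prod:
  assumes sym: "sym_mat n A" and t: "0 \<le> t" "t \<le> 1"
  shows "0 \<le> Re (det (Nt n A t) * cnj (det (Dt n A t)))"
proof -
  let ?N = "Nt n A t"
  let ?d = "\<lambda>i::nat. if i = 0 then 1 - t else 1"
  have N: "?N \<in> carrier_mat (Suc n) (Suc n)" by (simp add: Nt_def)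
  note adj = adj_mat[OF N]
  define a where "a = col (adj_mat ?N) 0"
  have a: "a \<in> carrier_vec (Suc n)" unfolding a_def carrier_vec_def using adj(1) by simp
  have Na: "?N *\<^sub>v a = col (det ?N \<cdot>\<^sub>m 1\<^sub>m (Suc n)) 0"
    unfolding a_def using col_mult2[OF N adj(1), of 0] adj(2) by simp
  have Nai: "(?N *\<^sub>v a) $ i = (if i = 0 then det ?N else 0)" if i: "i < Suc n" for i
    using i unfolding Na by simp
  have "qf (Suc n) ?N a = (\<Sum>i<Suc n. cnj (a$i) * (if i = 0 then det ?N else 0))"
    unfolding qf_def by (intro sum.cong refl, subst Nai) auto
  also have "\<dots> = cnj (a$0) * det ?N" by (subst sum.lessThan_Suc_shift) simp
  also have "a$0 = det (Dt n A t)"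
    using adj(1) by (simp add: a_def adj_mat_def cofactor_def Nt_delete)
  finally have q: "qf (Suc n) ?N a = cnj (det (Dt n A t)) * det ?N" .
  have "Re (qf (Suc n) ?N a) = (\<Sum>i<Suc n. ?d i * (cmod (a$i))^2)"
    unfolding Nt_def by (rule hmat_Re_qf[OF sym_mat_sym[OF sym] a])
  also have "\<dots> \<ge> 0" using t by (intro sum_nonneg) auto
  finally show ?thesis using q by (simp add: mult.commute)
qed




lemma fac1_ok:
  assumes "0 \<le> Re z" "z \<noteq> 0" "0 \<le> t" "t \<le> 1"
  shows "1 - complex_of_real t + complex_of_real t * z \<notin> \<real>\<^sub>\<le>\<^sub>0"
proof
  assume "1 - complex_of_real t + complex_of_real t * z \<in> \<real>\<^sub>\<le>\<^sub>0"
  hence h: "1 - t + t * Re z \<le> 0" "t * Im z = 0" by (auto simp: complex_nonpos_Reals_iff)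
  have "t * Re z \<ge> 0" using assms by simp
  hence t1: "t = 1" using h assms by linarith
  hence "Re z = 0" using h assms by simp
  moreover have "Im z = 0" using h t1 by simp
  ultimately show False using assms(2) by (simp add: complex_eq_iff)
qed

lemma fac2_ok: "1 + \<i> * complex_of_real t * complex_of_real m \<notin> \<real>\<^sub>\<le>\<^sub>0"
  by (simp add: complex_nonpos_Reals_iff)

lemma nonpos_ne0: "w \<notin> \<real>\<^sub>\<le>\<^sub>0 \<Longrightarrow> w \<noteq> 0"
  by auto

lemma main_off_S:
  assumes sym: "sym_mat n A" and nS: "\<not> in_S n A"
  shows "\<bar>Theta_hat n A - tr_arctan (plus_part n A)\<bar> \<le> pi/2"
proof -
  let ?M = "In_iA n A" and ?C = "plus_part n A"
  define E where "E = {z. eigenvalue ?M z}"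
  define k where "k = (\<lambda>z. order z (char_poly ?M))"
  define F where "F = {m. eigenvalue ?C m}"
  define l where "l = (\<lambda>m. order m (char_poly ?C))"
  have M: "?M \<in> carrier_mat (Suc n) (Suc n)" by (simp add: In_iA_hmat)
  have C: "?C \<in> carrier_mat n n" by (rule plus_part_carrier)
  have finE: "finite E" unfolding E_def by (rule cp_decomp(2)[OF M])
  have finF: "finite F"
  proof -
    have "char_poly ?C \<noteq> 0" using degree_monic_char_poly[OF C] by auto
    hence "finite {m. poly (char_poly ?C) m = 0}" by (rule poly_roots_finite)
    moreover have "F = {m. poly (char_poly ?C) m = 0}" unfolding F_def using eigenvalue_root_char_poly[OF C] by auto
    ultimately show ?thesis by simp
  qed
  have Ez: "0 \<le> Re z" "z \<noteq> 0" if "z \<in> E" for z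
    using eig_M[OF sym nS] that unfolding E_def by auto
  define P where "P = (\<lambda>t::real. \<Prod>z\<in>E. (1 - complex_of_real t + complex_of_real t * z)^k z)"
  define Q where "Q = (\<lambda>t::real. \<Prod>m\<in>F. (1 + \<i> * complex_of_real t * complex_of_real m)^l m)"
  define G where "G = (\<lambda>t::real. (\<Sum>z\<in>E. of_nat (k z) * Ln (1 - complex_of_real t + complex_of_real t * z))
     - (\<Sum>m\<in>F. of_nat (l m) * Ln (1 + \<i> * complex_of_real t * complex_of_real m)) - Ln (P t / Q t))"
  have f1: "1 - complex_of_real t + complex_of_real t * z \<notin> \<real>\<^sub>\<le>\<^sub>0" if "t \<in> {0..1}" "z \<in> E" for t z
    using fac1_ok[OF Ez[OF that(2)]] that(1) by auto
  have Pnz: "P t \<noteq> 0" if "t \<in> {0..1}" for t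
    unfolding P_def using f1[OF that] finE by (auto simp: prod_zero_iff dest!: nonpos_ne0)
  have Qnz: "Q t \<noteq> 0" for t
    unfolding Q_def using fac2_ok finF by (auto simp: prod_zero_iff dest: nonpos_ne0)
  have PQ: "0 \<le> Re (P t * cnj (Q t))" if "t \<in> {0..1}" for t
  proof (cases "t = 0")
    case True thus ?thesis by (simp add: P_def Q_def)
  next
    case False
    hence t: "t > 0" "t \<le> 1" using that by auto
    have "P t = det (Nt n A t)" unfolding P_def E_def k_def by (rule Nt_det[OF t(1), symmetric])
    moreover have "Q t = det (Dt n A t)" unfolding Q_def F_def l_def by (rule Dt_det[OF sym t(1), symmetric])
    ultimately show ?thesis using Re_det_prod[OF sym] t by simp
  qed
  have RePQ: "0 \<le> Re (P t / Q t)" if "t \<in> {0..1}" for t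
  proof -
    have "Re (P t / Q t) = Re (P t * cnj (Q t)) / (cmod (Q t))^2"
      by (simp add: Re_divide')
    thus ?thesis using PQ[OF that] by simp
  qed
  have f3: "P t / Q t \<notin> \<real>\<^sub>\<le>\<^sub>0" if "t \<in> {0..1}" for t
  proof
    assume "P t / Q t \<in> \<real>\<^sub>\<le>\<^sub>0"
    hence "Re (P t / Q t) = 0" "Im (P t / Q t) = 0" using RePQ[OF that] by (auto simp: complex_nonpos_Reals_iff)
    hence "P t / Q t = 0" by (simp add: complex_eq_iff)
    with Pnz[OF that] Qnz show False by simp
  qed
  have expG: "exp (G t) = 1" if t: "t \<in> {0..1}" for t
  proof -
    have e1: "exp (\<Sum>z\<in>E. of_nat (k z) * Ln (1 - complex_of_real t + complex_of_real t * z)) = P t"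
      unfolding P_def exp_sum[OF finE] exp_of_nat_mult
      using f1[OF t] by (intro prod.cong refl) (simp add: nonpos_ne0)
    have e2: "exp (\<Sum>m\<in>F. of_nat (l m) * Ln (1 + \<i> * complex_of_real t * complex_of_real m)) = Q t"
      unfolding Q_def exp_sum[OF finF] exp_of_nat_mult
      using fac2_ok by (intro prod.cong refl) (simp add: nonpos_ne0)
    have e3: "exp (Ln (P t / Q t)) = P t / Q t" by (rule exp_Ln, rule nonpos_ne0[OF f3[OF t]])
    show ?thesis unfolding G_def exp_diff e1 e2 e3 using Pnz[OF t] Qnz by simp
  qed
  have contP: "continuous_on {0..1} P" unfolding P_def by (intro continuous_intros)
  have contQ: "continuous_on {0..1} Q" unfolding Q_def by (intro continuous_intros)
  have contG: "continuous_on {0..1} G"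
    unfolding G_def
    by (intro continuous_intros contP contQ continuous_on_divide) (auto simp: f1 fac2_ok f3 Qnz)
  have disc: "\<exists>e>0. \<forall>y. y \<in> {0..1} \<and> G y \<noteq> G x \<longrightarrow> e \<le> norm (G y - G x)"
    if x: "x \<in> {0..1}" for x
  proof (intro exI[of _ "2*pi"] conjI allI impI)
    show "0 < 2 * pi" by simp
    fix y assume y: "y \<in> {0..1} \<and> G y \<noteq> G x"
    obtain a :: int where a: "Re (G x) = 0" "Im (G x) = of_int (2*a) * pi"
      using expG[OF x] exp_eq_1 by blast
    obtain b :: int where b: "Re (G y) = 0" "Im (G y) = of_int (2*b) * pi"
      using expG[of y] y exp_eq_1 by blast
    have "a \<noteq> b" using a b y by (auto simp: complex_eq_iff)
    hence "1 \<le> \<bar>of_int (b - a) :: real\<bar>" by linarith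
    hence "2*pi \<le> 2*pi * \<bar>of_int (b - a)\<bar>" by simp
    also have "\<dots> = \<bar>Im (G y - G x)\<bar>"
    proof -
      have "Im (G y - G x) = (2*pi) * of_int (b - a)" using a b by (simp add: algebra_simps)
      thus ?thesis by (simp add: abs_mult)
    qed
    also have "\<dots> \<le> norm (G y - G x)" by (rule abs_Im_le_cmod)
    finally show "2 * pi \<le> norm (G y - G x)" .
  qed
  have "G constant_on {0..1}"
    by (rule continuous_discrete_range_constant[OF connected_Icc contG disc]) auto
  then obtain c where c: "\<And>t. t \<in> {0..1} \<Longrightarrow> G t = c" unfolding constant_on_def by blast
  have G0: "G 0 = 0" by (simp add: G_def P_def Q_def)
  have G1: "G 1 = 0" using c[of 0] c[of 1] G0 by simp
  have ImG: "Im (G 1) = Theta_hat n A - tr_arctan ?C - Arg (P 1 / Q 1)"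
  proof -
    have i1: "Im (\<Sum>z\<in>E. of_nat (k z) * Ln (1 - complex_of_real 1 + complex_of_real 1 * z)) = Theta_hat n A"
      unfolding Theta_hat_def E_def[symmetric] k_def[symmetric]
      by (simp, intro sum.cong refl) (simp add: Arg_eq_Im_Ln Ez k_def)
    have am: "Im (Ln (1 + \<i> * complex_of_real m)) = arctan m" for m
    proof -
      have "Im (Ln (1 + \<i> * complex_of_real m)) = Arg (1 + \<i> * complex_of_real m)"
        by (rule Arg_eq_Im_Ln[symmetric]) (simp add: complex_eq_iff)
      also have "\<dots> = arctan m" by (subst arg_conv_arctan) auto
      finally show ?thesis .
    qed
    have "Im (\<Sum>m\<in>F. of_nat (l m) * Ln (1 + \<i> * complex_of_real 1 * complex_of_real m))
        = (\<Sum>m\<in>F. real (l m) * Im (Ln (1 + \<i> * complex_of_real m)))" by simp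
    also have "\<dots> = (\<Sum>m\<in>F. real (l m) * arctan m)" by (simp only: am)
    also have "\<dots> = tr_arctan ?C" by (simp add: tr_arctan_def F_def l_def)
    finally have i2: "Im (\<Sum>m\<in>F. of_nat (l m) * Ln (1 + \<i> * complex_of_real 1 * complex_of_real m)) = tr_arctan ?C" .
    have i3: "Im (Ln (P 1 / Q 1)) = Arg (P 1 / Q 1)"
      using Pnz[of 1] Qnz[of 1] by (simp add: Arg_eq_Im_Ln)
    show ?thesis unfolding G_def using i1 i2 i3 by simp
  qed
  have "Theta_hat n A - tr_arctan ?C = Arg (P 1 / Q 1)" using ImG G1 by simp
  moreover have "\<bar>Arg (P 1 / Q 1)\<bar> \<le> pi/2" using RePQ[of 1] Arg_Re_nonneg[of "P 1 / Q 1"] by simp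
  ultimately show ?thesis by simp
qed

theorem lemma3p5:
  fixes n :: nat and A :: "real mat"
  assumes "sym_mat n A"
  shows "\<bar>Theta_tilde n A - tr_arctan (plus_part n A)\<bar> \<le> pi/2 \<and>
         \<bar>Theta_tilde_low n A - tr_arctan (plus_part n A)\<bar> \<le> pi/2"
proof (cases "in_S n A")
  case True
  thus ?thesis by (simp add: Theta_tilde_def Theta_tilde_low_def)
next
  case False
  thus ?thesis using main_off_S[OF assms False] by (simp add: Theta_tilde_def Theta_tilde_low_def)
qed

end
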